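(* Let $\ell$ be a line of $\mathbb{P}^2$ defined over $\mathbb{F}_q$ and $P$ an $\mathbb{F}_q$-point of $\ell$. Then the set $S_{\ell\setminus P}^{\emptyset,\ell}=R_{\mathrm{hom}}\setminus S_{\ell\setminus P}^{\ell}$ of $f$ such that $C_f$ meets $\ell$ with multiplicity at least $2$ (i.e. $C_f\cap \ell$ is not smooth of dimension $0$) at some closed point of $\ell$ other than $P$ has density $q^{-1}$.
   Context: Let $q$ be a prime power, $R_{\mathrm{hom}}=\bigcup_{d\ge1}R_d$ with $R_d\subseteq\mathbb{F}_q[x,y,z]$ the homogeneous degree-$d$ polynomials (including $0$), $\mu(\mathcal{P})=\lim_{d\to\infty}|\mathcal{P}\cap R_d|/|R_d|$, $C_f=\{f=0\}\subseteq\mathbb{P}^2$. For quasi-projective $U\subseteq X\subseteq\mathbb{P}^2$ with $X$ smooth, $S_U^X=\{f: C_f\cap X\text{ is smooth of dimension }\dim X-1\text{ at every closed point of }U\}$ (empty scheme counts as smooth of any dimension). *)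

theory Defs
  imports Complex_Main "HOL-Computational_Algebra.Polynomial"
begin

text \<open>A homogeneous polynomial of degree d in F[x,y,z] is represented by its coefficient
function on exponent triples (i,j,k) (monomial x^i y^j z^k), vanishing off i+j+k = d.\<close>
type_synonym 'a hpoly = "nat \<times> nat \<times> nat \<Rightarrow> 'a"

definition hom_polys :: "nat \<Rightarrow> ('a::zero) hpoly set" where
  "hom_polys d = {f. \<forall>i j k. i + j + k \<noteq> d \<longrightarrow> f (i, j, k) = 0}"

definition lin_indep2 :: "('a::field) \<times> 'a \<times> 'a \<Rightarrow> 'a \<times> 'a \<times> 'a \<Rightarrow> bool" where
  "lin_indep2 u v = (\<forall>a b. a * fst u + b * fst v = 0 \<and> a * fst (snd u) + b * fst (snd v) = 0
      \<and> a * snd (snd u) + b * snd (snd v) = 0 \<longrightarrow> a = 0 \<and> b = 0)"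

text \<open>Restriction of the degree-d form f to the line spanned by u, v, in the affine chart
t = 1 of the parametrisation (s:t) |-> s u + t v, i.e. the univariate polynomial
s |-> f(s u + v). The point P = [u] is the unique point of the line outside this chart.\<close>
definition restrict_line :: "('a::comm_ring_1) hpoly \<Rightarrow> nat \<Rightarrow> 'a \<times> 'a \<times> 'a \<Rightarrow> 'a \<times> 'a \<times> 'a \<Rightarrow> 'a poly" where
  "restrict_line f d u v =
     (\<Sum>i\<le>d. \<Sum>j\<le>d - i. smult (f (i, j, d - i - j))
        ([:fst v, fst u:] ^ i * [:fst (snd v), fst (snd u):] ^ j
         * [:snd (snd v), snd (snd u):] ^ (d - i - j)))"

text \<open>C_f meets the line with multiplicity at least 2 at some closed point other than P
(closed points of the chart = monic irreducible polynomials in s); this includes the case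
that f vanishes identically on the line.\<close>
definition mult2_off_P :: "nat \<Rightarrow> ('a::field) \<times> 'a \<times> 'a \<Rightarrow> 'a \<times> 'a \<times> 'a \<Rightarrow> 'a hpoly \<Rightarrow> bool" where
  "mult2_off_P d u v f = (\<exists>p :: 'a poly. irreducible p \<and> p ^ 2 dvd restrict_line f d u v)"

end

theory Submission
  imports Defs
begin



lemma irr_nz: "irreducible p \<Longrightarrow> p \<noteq> 0" by (simp add: irreducible_def)
lemma irr_nu: "irreducible p \<Longrightarrow> \<not> is_unit p" by (simp add: irreducible_def)

lemma irr_deg:
  fixes p :: "'a::field poly"
  assumes "irreducible p" shows "degree p > 0"
  using assms is_unit_iff_degree[of p] irr_nz irr_nu by auto

lemma bezout_irr:
  fixes p a :: "'a::field poly"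
  assumes irr: "irreducible p" and nd: "\<not> p dvd a"
  shows "\<exists>r s. r * p + s * a = 1"
proof -
  define I where "I = {r * p + s * a | r s. True}"
  have aI: "a \<in> I" unfolding I_def by (rule CollectI, rule exI[of _ 0], rule exI[of _ 1]) simp
  have a0: "a \<noteq> 0" using nd by auto
  have Isub: "x - y * z \<in> I" if "x \<in> I" "z \<in> I" for x y z
  proof -
    from that obtain r1 s1 r2 s2 where "x = r1 * p + s1 * a" "z = r2 * p + s2 * a"
      unfolding I_def by blast
    then have "x - y * z = (r1 - y * r2) * p + (s1 - y * s2) * a" by (simp add: algebra_simps)
    then show ?thesis unfolding I_def by blast
  qed
  have pI: "p \<in> I" unfolding I_def by (rule CollectI, rule exI[of _ 1], rule exI[of _ 0]) simp
  define n where "n = (LEAST n. \<exists>x\<in>I. x \<noteq> 0 \<and> degree x = n)"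
  have ex: "\<exists>x\<in>I. x \<noteq> 0 \<and> degree x = n"
    unfolding n_def by (rule LeastI[of _ "degree a"]) (use aI a0 in blast)
  then obtain m where mI: "m \<in> I" and m0: "m \<noteq> 0" and dm: "degree m = n" by blast
  have mindeg: "degree x \<ge> n" if "x \<in> I" "x \<noteq> 0" for x
    unfolding n_def by (rule Least_le) (use that in blast)
  have mdvd: "m dvd y" if "y \<in> I" for y
  proof -
    have "y mod m \<in> I"
      using Isub[OF that mI, of "y div m"] by (simp add: minus_div_mult_eq_mod)
    moreover have "y mod m \<noteq> 0 \<Longrightarrow> degree (y mod m) < degree m"
      using degree_mod_less'[OF m0] by blast
    ultimately have "y mod m = 0" using mindeg dm by fastforce
    then show ?thesis by (simp add: mod_0_imp_dvd)
  qed
  from mdvd[OF pI] obtain k where pk: "p = m * k" by (elim dvdE)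
  from irr pk have "is_unit m \<or> is_unit k" by (simp add: irreducible_def)
  moreover have "\<not> is_unit k"
  proof
    assume "is_unit k"
    then have "p dvd m" using pk by (metis dvd_mult_unit_iff dvd_refl)
    then have "p dvd a" using mdvd[OF aI] by (rule dvd_trans)
    with nd show False by simp
  qed
  ultimately have um: "is_unit m" by blast
  from mI obtain r s where ms: "m = r * p + s * a" unfolding I_def by blast
  from um obtain w where "1 = m * w" by (elim dvdE)
  then have "(w * r) * p + (w * s) * a = 1" using ms by (simp add: algebra_simps)
  then show ?thesis by blast
qed

lemma irr_prime:
  fixes p :: "'a::field poly"
  assumes irr: "irreducible p" and d: "p dvd x * y"
  shows "p dvd x \<or> p dvd y"
proof (cases "p dvd x")
  case False
  then obtain r s where rs: "r * p + s * x = 1" using bezout_irr[OF irr] by blast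
  have "y = (r * y) * p + s * (x * y)" using arg_cong[OF rs, of "\<lambda>t. t * y"]
    by (simp add: algebra_simps)
  moreover have "p dvd (r * y) * p + s * (x * y)" using d by simp
  ultimately show ?thesis by (metis dvd_add dvd_mult dvd_mult2 dvd_refl)
qed simp

lemma monic_irr_divisor:
  fixes g :: "'a::field poly"
  shows "degree g > 0 \<Longrightarrow> \<exists>p. irreducible p \<and> lead_coeff p = 1 \<and> p dvd g"
proof (induction "degree g" arbitrary: g rule: less_induct)
  case less
  have g0: "g \<noteq> 0" using less.prems by auto
  have gu: "\<not> is_unit g" using less.prems is_unit_iff_degree[OF g0] by simp
  show ?case
  proof (cases "irreducible g")
    case True
    define c where "c = lead_coeff g"
    have c0: "c \<noteq> 0" using g0 c_def by simp
    define p where "p = [:inverse c:] * g"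
    have "is_unit [:inverse c:]" using c0 by (simp add: is_unit_triv)
    then have "irreducible p" using True p_def irreducible_mult_unit_left by blast
    moreover have "lead_coeff p = 1" unfolding p_def using c0 c_def by (simp add: lead_coeff_mult)
    moreover have "p dvd g"
    proof -
      have "g = [:c:] * p" unfolding p_def using c0 by simp
      then show ?thesis by (metis dvd_triv_right)
    qed
    ultimately show ?thesis by blast
  next
    case False
    then obtain a b where gab: "g = a * b" and au: "\<not> is_unit a" and bu: "\<not> is_unit b"
      using g0 gu unfolding irreducible_def by blast
    have a0: "a \<noteq> 0" and b0: "b \<noteq> 0" using g0 gab by auto
    have da: "degree a > 0" using au is_unit_iff_degree[OF a0] by simp
    have db: "degree b > 0" using bu is_unit_iff_degree[OF b0] by simp
    have "degree g = degree a + degree b" using gab a0 b0 by (simp add: degree_mult_eq)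
    then have "degree a < degree g" using db by simp
    from less.hyps[OF this da] obtain p where "irreducible p" "lead_coeff p = 1" "p dvd a" by blast
    then show ?thesis using gab by auto
  qed
qed




definition sqf :: "'a::field poly \<Rightarrow> bool" where
  "sqf b \<longleftrightarrow> b \<noteq> 0 \<and> \<not> (\<exists>p. irreducible p \<and> p ^ 2 dvd b)"

lemma decomp_exists:
  fixes g :: "'a::field poly"
  shows "g \<noteq> 0 \<Longrightarrow> \<exists>a b. lead_coeff a = 1 \<and> sqf b \<and> g = a ^ 2 * b"
proof (induction "degree g" arbitrary: g rule: less_induct)
  case less
  show ?case
  proof (cases "sqf g")
    case True
    then show ?thesis by (intro exI[of _ 1] exI[of _ g]) simp
  next
    case False
    then obtain p where p: "irreducible p" "p ^ 2 dvd g" using less.prems unfolding sqf_def by blast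
    obtain p' where p': "irreducible p'" "lead_coeff p' = 1" "p' dvd p"
      using monic_irr_divisor[OF irr_deg[OF p(1)]] by blast
    have "p' ^ 2 dvd g" using p(2) p'(3) by (meson dvd_trans dvd_power_same)
    then obtain h where gh: "g = p' ^ 2 * h" by (elim dvdE)
    have h0: "h \<noteq> 0" using gh less.prems by auto
    have p0: "p' \<noteq> 0" using irr_nz[OF p'(1)] .
    have "degree g = 2 * degree p' + degree h" using gh h0 p0
      by (simp add: degree_mult_eq degree_power_eq)
    then have "degree h < degree g" using irr_deg[OF p'(1)] by simp
    from less.hyps[OF this h0] obtain a b where ab: "lead_coeff a = 1" "sqf b" "h = a ^ 2 * b" by blast
    have "g = (p' * a) ^ 2 * b" using gh ab(3) by (simp add: power_mult_distrib algebra_simps)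
    moreover have "lead_coeff (p' * a) = 1" using ab(1) p'(2) by (simp add: lead_coeff_mult)
    ultimately show ?thesis using ab(2) by blast
  qed
qed

lemma lc1_nz: "lead_coeff (a::'a::field poly) = 1 \<Longrightarrow> a \<noteq> 0" by auto

lemma decomp_unique:
  fixes a :: "'a::field poly"
  shows "lead_coeff a = 1 \<Longrightarrow> lead_coeff c = 1 \<Longrightarrow> sqf b \<Longrightarrow> sqf e \<Longrightarrow>
         a ^ 2 * b = c ^ 2 * e \<Longrightarrow> a = c"
proof (induction "degree a" arbitrary: a c b e rule: less_induct)
  case less
  note la = less.prems(1) and lc = less.prems(2) and sb = less.prems(3) and se = less.prems(4)
    and eq = less.prems(5)
  show ?case
  proof (cases "degree a = 0")
    case True
    have a1: "a = 1" using True la by (metis degree_eq_zeroE lead_coeff_pCons(2) pCons_0_0 one_pCons)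
    have "degree c = 0"
    proof (rule ccontr)
      assume "degree c \<noteq> 0"
      then obtain p where p: "irreducible p" "p dvd c" using monic_irr_divisor[of c] by auto
      have "p ^ 2 dvd b" using eq a1 p(2) by (simp add: dvd_power_same dvd_mult2)
      then show False using sb p(1) unfolding sqf_def by blast
    qed
    then have "c = 1" using lc by (metis degree_eq_zeroE lead_coeff_pCons(2) pCons_0_0 one_pCons)
    then show ?thesis using a1 by simp
  next
    case False
    then obtain p where p: "irreducible p" "lead_coeff p = 1" "p dvd a"
      using monic_irr_divisor[of a] by auto
    obtain a' where aa: "a = p * a'" using p(3) by (elim dvdE)
    have p0: "p \<noteq> 0" using irr_nz[OF p(1)] .
    have la': "lead_coeff a' = 1" using la aa p(2) by (simp add: lead_coeff_mult)
    have "degree a = degree p + degree a'" using aa p0 lc1_nz[OF la'] by (simp add: degree_mult_eq)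
    then have dlt: "degree a' < degree a" using irr_deg[OF p(1)] by simp
    have "p dvd c ^ 2 * e" using eq aa by (metis dvd_mult2 dvd_power dvd_triv_left zero_less_numeral power_mult_distrib)
    then have "p dvd c \<or> p dvd e" using irr_prime[OF p(1)]
      by (metis power2_eq_square)
    show ?thesis
    proof (cases "p dvd c")
      case True
      obtain c' where cc: "c = p * c'" using True by (elim dvdE)
      have lc': "lead_coeff c' = 1" using lc cc p(2) by (simp add: lead_coeff_mult)
      have "p ^ 2 * (a' ^ 2 * b) = p ^ 2 * (c' ^ 2 * e)" using eq aa cc
        by (simp add: power_mult_distrib algebra_simps)
      then have "a' ^ 2 * b = c' ^ 2 * e" using p0 by simp
      from less.hyps[OF dlt la' lc' sb se this] show ?thesis using aa cc by simp
    next
      case False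
      with \<open>p dvd c \<or> p dvd e\<close> have "p dvd e" by blast
      then obtain e' where ee: "e = p * e'" by (elim dvdE)
      have "p * (p * (a' ^ 2 * b)) = p * (c ^ 2 * e')" using eq aa ee
        by (simp add: power2_eq_square algebra_simps)
      then have "p * (a' ^ 2 * b) = c ^ 2 * e'" using p0 by simp
      then have "p dvd c ^ 2 * e'" by (metis dvd_triv_left)
      then have "p dvd c \<or> p dvd e'" using irr_prime[OF p(1)]
        by (metis power2_eq_square)
      then have "p dvd e'" using False by blast
      then have "p ^ 2 dvd e" using ee by (simp add: power2_eq_square)
      then show ?thesis using se p(1) unfolding sqf_def by blast
    qed
  qed
qed




lemma card_deg_le:
  "card {p :: 'a::{finite,field} poly. degree p \<le> n} = card (UNIV :: 'a set) ^ Suc n \<and>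
   finite {p :: 'a poly. degree p \<le> n}"
proof -
  let ?A = "{p :: 'a poly. degree p \<le> n}"
  let ?B = "{xs :: 'a list. set xs \<subseteq> UNIV \<and> length xs = Suc n}"
  have bij: "bij_betw (\<lambda>p. map (coeff p) [0..<Suc n]) ?A ?B"
  proof (rule bij_betw_byWitness[where f' = Poly])
    show "\<forall>a\<in>?A. Poly (map (coeff a) [0..<Suc n]) = a"
    proof
      fix a :: "'a poly" assume "a \<in> ?A"
      then have da: "degree a \<le> n" by simp
      show "Poly (map (coeff a) [0..<Suc n]) = a"
      proof (rule poly_eqI)
        fix i show "coeff (Poly (map (coeff a) [0..<Suc n])) i = coeff a i"
          using da by (cases "i < Suc n") (auto simp: nth_default_def coeff_eq_0 simp del: upt_Suc)
      qed
    qed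
    show "\<forall>a'\<in>?B. map (coeff (Poly a')) [0..<Suc n] = a'"
      by (auto intro!: nth_equalityI simp: nth_default_def simp del: upt_Suc)
    show "(\<lambda>p. map (coeff p) [0..<Suc n]) ` ?A \<subseteq> ?B" by auto
    show "Poly ` ?B \<subseteq> ?A"
    proof clarify
      fix xs :: "'a list" assume "set xs \<subseteq> UNIV" "length xs = Suc n"
      then show "degree (Poly xs) \<le> n" by (intro degree_le) (auto simp: nth_default_def)
    qed
  qed
  have fB: "finite ?B" using finite_lists_length_eq[of "UNIV :: 'a set"] by simp
  have "card ?A = card ?B" using bij_betw_same_card[OF bij] .
  also have "\<dots> = card (UNIV :: 'a set) ^ Suc n" by (rule card_lists_length_eq) simp
  finally show ?thesis using bij_betw_finite[OF bij] fB by simp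
qed

definition monics :: "nat \<Rightarrow> 'a::field poly set" where
  "monics k = {a. lead_coeff a = 1 \<and> degree a = k}"

lemma card_monics: "card (monics k :: 'a::{finite,field} poly set) = card (UNIV :: 'a set) ^ k \<and> finite (monics k :: 'a poly set)"
proof (cases k)
  case 0
  have "monics 0 = {1 :: 'a poly}"
    unfolding monics_def by (auto elim!: degree_eq_zeroE simp: one_pCons)
  then show ?thesis using 0 by simp
next
  case (Suc m)
  let ?A = "{p :: 'a poly. degree p \<le> m}"
  have bij: "bij_betw (\<lambda>p. p + monom 1 k) ?A (monics k)"
  proof (rule bij_betw_byWitness[where f' = "\<lambda>a::'a poly. a - monom 1 k"])
    show "\<forall>a\<in>?A. a + monom 1 k - monom 1 k = a" by simp
    show "\<forall>a'\<in>monics k. a' - monom 1 k + monom 1 k = a'" by simp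
    show "(\<lambda>p. p + monom 1 k) ` ?A \<subseteq> monics k"
    proof
      fix x :: "'a poly" assume "x \<in> (\<lambda>p. p + monom 1 k) ` ?A"
      then obtain p where p: "degree p \<le> m" "x = p + monom 1 k" by auto
      have dx: "degree x = k" using p Suc
        by (simp add: degree_add_eq_right degree_monom_eq)
      have "coeff x k = 1" using p Suc by (simp add: coeff_eq_0)
      then show "x \<in> monics k" using dx unfolding monics_def by simp
    qed
    show "(\<lambda>a. a - monom 1 k) ` monics k \<subseteq> ?A"
    proof
      fix x :: "'a poly" assume "x \<in> (\<lambda>a. a - monom 1 k) ` monics k"
      then obtain a where a: "lead_coeff a = 1" "degree a = k" "x = a - monom 1 k"
        unfolding monics_def by auto
      have "degree x \<le> m"
      proof (rule degree_le, intro allI impI)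
        fix i assume "m < i"
        then show "coeff x i = 0" using a Suc by (cases "i = k") (auto simp: coeff_eq_0)
      qed
      then show "x \<in> ?A" by simp
    qed
  qed
  then show ?thesis using card_deg_le[of m] Suc
    by (metis bij_betw_finite bij_betw_same_card)
qed

definition sqset :: "nat \<Rightarrow> 'a::field poly set" where
  "sqset d = {b. degree b \<le> d \<and> sqf b}"

lemma finite_sqset: "finite (sqset d :: 'a::{finite,field} poly set)"
  using card_deg_le[of d] by (rule conjE) (auto intro: finite_subset simp: sqset_def)

lemma sigma_count:
  "card {g :: 'a::{finite,field} poly. degree g \<le> d \<and> g \<noteq> 0}
     = (\<Sum>k\<le>d div 2. card (UNIV :: 'a set) ^ k * card (sqset (d - 2 * k) :: 'a poly set))"
proof -
  let ?S = "SIGMA k:{..d div 2}. ((monics k :: 'a poly set) \<times> (sqset (d - 2 * k) :: 'a poly set))"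
  let ?T = "{g :: 'a poly. degree g \<le> d \<and> g \<noteq> 0}"
  let ?phi = "\<lambda>(k, a, b). a ^ 2 * b :: 'a poly"
  have bij: "bij_betw ?phi ?S ?T"
  proof (rule bij_betw_imageI)
    show "inj_on ?phi ?S"
    proof (rule inj_onI)
      fix x y assume hx: "x \<in> ?S" and hy: "y \<in> ?S" and hxy: "?phi x = ?phi y"
      obtain k a b where xe: "x = (k, a, b)" by (metis prod_cases3)
      obtain k' a' b' where ye: "y = (k', a', b')" by (metis prod_cases3)
      have h: "(k, a, b) \<in> ?S" "(k', a', b') \<in> ?S" "a ^ 2 * b = a' ^ 2 * b'"
        using hx hy hxy xe ye by auto
      then have "lead_coeff a = 1" "lead_coeff a' = 1" "sqf b" "sqf b'" "degree a = k" "degree a' = k'"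
        by (auto simp: monics_def sqset_def)
      then have aa: "a = a'" using decomp_unique h(3) by blast
      then have "b = b'" using h(3) \<open>lead_coeff a = 1\<close> by auto
      then show "x = y" unfolding xe ye using aa \<open>degree a = k\<close> \<open>degree a' = k'\<close> by simp
    qed
    show "?phi ` ?S = ?T"
    proof (rule set_eqI, rule iffI)
      fix g assume "g \<in> ?phi ` ?S"
      then obtain k a b where h: "k \<le> d div 2" "lead_coeff a = 1" "degree a = k" "sqf b"
        "degree b \<le> d - 2 * k" "g = a ^ 2 * b"
        by (auto simp: monics_def sqset_def)
      have b0: "b \<noteq> 0" using h(4) sqf_def by auto
      have a0: "a \<noteq> 0" using h(2) by auto
      have "degree g = 2 * k + degree b" using h a0 b0 by (simp add: degree_mult_eq degree_power_eq)
      then have "degree g \<le> d" using h(1,5) by linarith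
      then show "g \<in> ?T" using a0 b0 h(6) by simp
    next
      fix g assume "g \<in> ?T"
      then have dg: "degree g \<le> d" and g0: "g \<noteq> 0" by auto
      obtain a b where ab: "lead_coeff a = 1" "sqf b" "g = a ^ 2 * b" using decomp_exists[OF g0] by blast
      have b0: "b \<noteq> 0" using ab(2) sqf_def by auto
      have a0: "a \<noteq> 0" using ab(1) by auto
      have dd: "degree g = 2 * degree a + degree b" using ab a0 b0 by (simp add: degree_mult_eq degree_power_eq)
      have "(degree a, a, b) \<in> ?S" using dd dg ab by (auto simp: monics_def sqset_def)
      then show "g \<in> ?phi ` ?S" using ab(3) by (intro image_eqI[of _ _ "(degree a, a, b)"]) auto
    qed
  qed
  have "card ?S = card ?T" by (rule bij_betw_same_card[OF bij])
  then have "card ?T = card ?S" by (rule sym)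
  also have "\<dots> = (\<Sum>k\<le>d div 2. card ((monics k :: 'a poly set) \<times> (sqset (d - 2 * k) :: 'a poly set)))"
    by (rule card_SigmaI) (auto simp: card_monics finite_sqset)
  also have "\<dots> = (\<Sum>k\<le>d div 2. card (UNIV :: 'a set) ^ k * card (sqset (d - 2 * k) :: 'a poly set))"
    by (simp add: card_cartesian_product card_monics)
  finally show ?thesis .
qed




lemma card_nz: "real (card {g :: 'a::{finite,field} poly. degree g \<le> d \<and> g \<noteq> 0})
   = real (card (UNIV :: 'a set)) ^ Suc d - 1"
proof -
  have e: "{g :: 'a poly. degree g \<le> d \<and> g \<noteq> 0} = {g. degree g \<le> d} - {0}" by auto
  have "card {g :: 'a poly. degree g \<le> d \<and> g \<noteq> 0} = card (UNIV :: 'a set) ^ Suc d - 1"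
    unfolding e using card_deg_le[of d, where 'a='a] by (simp add: card_Diff_singleton)
  moreover have "card (UNIV :: 'a set) ^ Suc d \<ge> 1"
    using finite_UNIV_card_ge_0[where 'a='a] by simp
  ultimately show ?thesis by (simp add: of_nat_diff)
qed

lemma sq_rec:
  "real (card (sqset (n + 2) :: 'a::{finite,field} poly set)) =
     real (card (UNIV :: 'a set)) ^ (n + 3) - 1 - real (card (UNIV :: 'a set)) * (real (card (UNIV :: 'a set)) ^ (n + 1) - 1)"
proof -
  let ?q = "card (UNIV :: 'a set)"
  let ?S = "\<lambda>m. card (sqset m :: 'a poly set)"
  have A: "real (card {g :: 'a poly. degree g \<le> n + 2 \<and> g \<noteq> 0}) =
      (\<Sum>k\<le>Suc (n div 2). real ?q ^ k * real (?S (n + 2 - 2 * k)))"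
    using sigma_count[of "n+2", where 'a='a] by simp
  have B: "real (card {g :: 'a poly. degree g \<le> n \<and> g \<noteq> 0}) =
      (\<Sum>k\<le>n div 2. real ?q ^ k * real (?S (n - 2 * k)))"
    using sigma_count[of n, where 'a='a] by simp
  have "(\<Sum>k\<le>Suc (n div 2). real ?q ^ k * real (?S (n + 2 - 2 * k)))
      = real (?S (n + 2)) + (\<Sum>k\<le>n div 2. real ?q ^ Suc k * real (?S (n + 2 - 2 * Suc k)))"
    by (subst sum.atMost_Suc_shift) simp
  also have "(\<Sum>k\<le>n div 2. real ?q ^ Suc k * real (?S (n + 2 - 2 * Suc k)))
      = real ?q * (\<Sum>k\<le>n div 2. real ?q ^ k * real (?S (n - 2 * k)))"
    by (simp add: sum_distrib_left mult.assoc)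
  finally show ?thesis using A B card_nz[of "n+2", where 'a='a] card_nz[of n, where 'a='a]
    by (simp add: numeral_eq_Suc)
qed

definition nsq :: "nat \<Rightarrow> 'a::field poly set" where
  "nsq d = {g. degree g \<le> d \<and> (\<exists>p. irreducible p \<and> p ^ 2 dvd g)}"

lemma exists_irr: "\<exists>p :: 'a::field poly. irreducible p"
  using monic_irr_divisor[of "[:0,1::'a:]"] by auto

lemma card_nsq:
  "real (card (nsq (n + 2) :: 'a::{finite,field} poly set)) =
     real (card (UNIV :: 'a set)) ^ (n + 2) - real (card (UNIV :: 'a set)) + 1"
proof -
  let ?q = "card (UNIV :: 'a set)"
  have e: "(nsq (n+2) :: 'a poly set) = {g. degree g \<le> n + 2} - sqset (n + 2)"
    unfolding nsq_def sqset_def sqf_def using exists_irr by auto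
  have sub: "(sqset (n + 2) :: 'a poly set) \<subseteq> {g. degree g \<le> n + 2}" unfolding sqset_def by auto
  have "card (nsq (n+2) :: 'a poly set) = card {g :: 'a poly. degree g \<le> n + 2} - card (sqset (n + 2) :: 'a poly set)"
    unfolding e by (rule card_Diff_subset[OF finite_sqset sub])
  moreover have "card (sqset (n + 2) :: 'a poly set) \<le> card {g :: 'a poly. degree g \<le> n + 2}"
    using card_mono[OF _ sub] card_deg_le[of "n+2", where 'a='a] by blast
  ultimately have "real (card (nsq (n+2) :: 'a poly set)) = real ?q ^ (n + 3) - real (card (sqset (n + 2) :: 'a poly set))"
    using card_deg_le[of "n+2", where 'a='a] by (simp add: of_nat_diff numeral_eq_Suc)
  then show ?thesis unfolding sq_rec by (simp add: algebra_simps numeral_eq_Suc)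
qed




abbreviation "LX u v \<equiv> [:fst v, fst u:]"
abbreviation "LY u v \<equiv> [:fst (snd v), fst (snd u):]"
abbreviation "LZ u v \<equiv> [:snd (snd v), snd (snd u):]"

definition RL :: "('a::comm_ring_1) hpoly \<Rightarrow> nat \<Rightarrow> 'a poly \<Rightarrow> 'a poly \<Rightarrow> 'a poly \<Rightarrow> 'a poly" where
  "RL f d X Y Z = (\<Sum>i\<le>d. \<Sum>j\<le>d - i. smult (f (i, j, d - i - j)) (X ^ i * Y ^ j * Z ^ (d - i - j)))"

lemma RL_eq: "restrict_line f d u v = RL f d (LX u v) (LY u v) (LZ u v)"
  unfolding restrict_line_def RL_def ..

lemma R_add: "restrict_line (\<lambda>t. f t + g t) d u v = restrict_line f d u v + restrict_line g d u v"
  unfolding RL_eq RL_def by (simp add: sum.distrib smult_add_left)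

lemma R_diff: "restrict_line (\<lambda>t. f t - g t) d u v = restrict_line f d u v - restrict_line g d u v"
  unfolding RL_eq RL_def by (simp add: sum_subtractf smult_diff_left)

lemma smult_sum_r: "smult c (\<Sum>i \<in> S. f i) = (\<Sum>i \<in> S. smult c (f i))"
  by (induct S rule: infinite_finite_induct) (auto simp: smult_add_right)

lemma R_smult: "restrict_line (\<lambda>t. c * f t) d u v = smult c (restrict_line f d u v)"
  unfolding RL_eq RL_def by (simp add: smult_sum_r)

lemma R_zero: "restrict_line (\<lambda>t. 0) d u v = 0"
  unfolding RL_eq RL_def by simp

lemma R_deg: "degree (restrict_line f d u v :: 'a::field poly) \<le> d"
  unfolding RL_eq RL_def
proof (rule degree_sum_le)
  fix i assume i: "i \<in> {..d}"
  show "degree (\<Sum>j\<le>d - i. smult (f (i, j, d - i - j)) (LX u v ^ i * LY u v ^ j * LZ u v ^ (d - i - j))) \<le> d"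
  proof (rule degree_sum_le)
  fix j assume j: "j \<in> {..d - i}"
  let ?P = "LX u v ^ i * LY u v ^ j * LZ u v ^ (d - i - j)"
  have "degree ?P \<le> i + j + (d - i - j)"
  proof -
    have "degree ?P \<le> degree (LX u v ^ i * LY u v ^ j) + degree (LZ u v ^ (d - i - j))"
      by (rule degree_mult_le)
    also have "\<dots> \<le> degree (LX u v ^ i) + degree (LY u v ^ j) + degree (LZ u v ^ (d - i - j))"
      using degree_mult_le by (simp add: add_right_mono)
    also have "\<dots> \<le> degree (LX u v) * i + degree (LY u v) * j + degree (LZ u v) * (d - i - j)"
      by (intro add_mono degree_power_le)
    also have "\<dots> \<le> i + j + (d - i - j)"
      by (intro add_mono) (auto simp: degree_pCons_eq_if)
    finally show ?thesis .
  qed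
  also have "\<dots> = d" using i j by auto
  finally show "degree (smult (f (i, j, d - i - j)) ?P) \<le> d"
    using degree_smult_le order_trans by blast
qed simp
qed simp

definition shx :: "('a::zero) hpoly \<Rightarrow> 'a hpoly" where
  "shx f = (\<lambda>(i, j, k). if i = 0 then 0 else f (i - 1, j, k))"
definition shy :: "('a::zero) hpoly \<Rightarrow> 'a hpoly" where
  "shy f = (\<lambda>(i, j, k). if j = 0 then 0 else f (i, j - 1, k))"
definition shz :: "('a::zero) hpoly \<Rightarrow> 'a hpoly" where
  "shz f = (\<lambda>(i, j, k). if k = 0 then 0 else f (i, j, k - 1))"

lemma shx_hom: "f \<in> hom_polys n \<Longrightarrow> shx f \<in> hom_polys (Suc n)"
  unfolding hom_polys_def shx_def by auto
lemma shy_hom: "f \<in> hom_polys n \<Longrightarrow> shy f \<in> hom_polys (Suc n)"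
  unfolding hom_polys_def shy_def by auto
lemma shz_hom: "f \<in> hom_polys n \<Longrightarrow> shz f \<in> hom_polys (Suc n)"
  unfolding hom_polys_def shz_def by auto

lemma R_shx: "RL (shx f) (Suc n) X Y Z = X * RL f n X Y Z"
  unfolding RL_def
  by (subst sum.atMost_Suc_shift) (simp add: shx_def sum_distrib_left mult_ac)

lemma R_shy: "RL (shy f) (Suc n) X Y Z = Y * RL f n X Y Z"
proof -
  let ?X = X and ?Y = Y and ?Z = Z
  have "(\<Sum>i\<le>Suc n. \<Sum>j\<le>Suc n - i. smult (shy f (i, j, Suc n - i - j)) (?X ^ i * ?Y ^ j * ?Z ^ (Suc n - i - j)))
      = (\<Sum>i\<le>n. \<Sum>j\<le>Suc n - i. smult (shy f (i, j, Suc n - i - j)) (?X ^ i * ?Y ^ j * ?Z ^ (Suc n - i - j)))"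
    by (subst sum.atMost_Suc) (simp add: shy_def)
  also have "\<dots> = (\<Sum>i\<le>n. ?Y * (\<Sum>j\<le>n - i. smult (f (i, j, n - i - j)) (?X ^ i * ?Y ^ j * ?Z ^ (n - i - j))))"
  proof (rule sum.cong[OF refl])
    fix i assume "i \<in> {..n}"
    then have i: "i \<le> n" by simp
    then have e: "Suc n - i = Suc (n - i)" by simp
    show "(\<Sum>j\<le>Suc n - i. smult (shy f (i, j, Suc n - i - j)) (?X ^ i * ?Y ^ j * ?Z ^ (Suc n - i - j)))
       = ?Y * (\<Sum>j\<le>n - i. smult (f (i, j, n - i - j)) (?X ^ i * ?Y ^ j * ?Z ^ (n - i - j)))"
      unfolding e by (subst sum.atMost_Suc_shift) (simp add: shy_def sum_distrib_left mult_ac)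
  qed
  finally show ?thesis unfolding RL_def by (simp add: sum_distrib_left)
qed

lemma R_shz: "RL (shz f) (Suc n) X Y Z = Z * RL f n X Y Z"
proof -
  let ?X = X and ?Y = Y and ?Z = Z
  have "(\<Sum>i\<le>Suc n. \<Sum>j\<le>Suc n - i. smult (shz f (i, j, Suc n - i - j)) (?X ^ i * ?Y ^ j * ?Z ^ (Suc n - i - j)))
      = (\<Sum>i\<le>n. \<Sum>j\<le>Suc n - i. smult (shz f (i, j, Suc n - i - j)) (?X ^ i * ?Y ^ j * ?Z ^ (Suc n - i - j)))"
    by (subst sum.atMost_Suc) (simp add: shz_def)
  also have "\<dots> = (\<Sum>i\<le>n. ?Z * (\<Sum>j\<le>n - i. smult (f (i, j, n - i - j)) (?X ^ i * ?Y ^ j * ?Z ^ (n - i - j))))"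
  proof (rule sum.cong[OF refl])
    fix i assume "i \<in> {..n}"
    then have i: "i \<le> n" by simp
    then have e: "Suc n - i = Suc (n - i)" by simp
    have "(\<Sum>j\<le>Suc (n - i). smult (shz f (i, j, Suc (n - i) - j)) (?X ^ i * ?Y ^ j * ?Z ^ (Suc (n - i) - j)))
       = (\<Sum>j\<le>n - i. smult (shz f (i, j, Suc (n - i) - j)) (?X ^ i * ?Y ^ j * ?Z ^ (Suc (n - i) - j)))"
      by (subst sum.atMost_Suc) (simp add: shz_def)
    also have "\<dots> = (\<Sum>j\<le>n - i. ?Z * smult (f (i, j, n - i - j)) (?X ^ i * ?Y ^ j * ?Z ^ (n - i - j)))"
    proof (rule sum.cong[OF refl])
      fix j assume "j \<in> {..n - i}"
      then have "Suc (n - i) - j = Suc (n - i - j)" by auto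
      then show "smult (shz f (i, j, Suc (n - i) - j)) (?X ^ i * ?Y ^ j * ?Z ^ (Suc (n - i) - j))
          = ?Z * smult (f (i, j, n - i - j)) (?X ^ i * ?Y ^ j * ?Z ^ (n - i - j))"
        by (simp add: shz_def mult_ac)
    qed
    finally show "(\<Sum>j\<le>Suc n - i. smult (shz f (i, j, Suc n - i - j)) (?X ^ i * ?Y ^ j * ?Z ^ (Suc n - i - j)))
       = ?Z * (\<Sum>j\<le>n - i. smult (f (i, j, n - i - j)) (?X ^ i * ?Y ^ j * ?Z ^ (n - i - j)))"
      unfolding e by (simp add: sum_distrib_left)
  qed
  finally show ?thesis unfolding RL_def by (simp add: sum_distrib_left)
qed




lemma hom_add: "f \<in> hom_polys d \<Longrightarrow> g \<in> hom_polys d \<Longrightarrow> (\<lambda>t. (f t :: 'a::monoid_add) + g t) \<in> hom_polys d"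
  unfolding hom_polys_def by auto
lemma hom_diff: "f \<in> hom_polys d \<Longrightarrow> g \<in> hom_polys d \<Longrightarrow> (\<lambda>t. (f t :: 'a::ab_group_add) - g t) \<in> hom_polys d"
  unfolding hom_polys_def by auto
lemma hom_smult: "f \<in> hom_polys d \<Longrightarrow> (\<lambda>t. (c::'a::mult_zero) * f t) \<in> hom_polys d"
  unfolding hom_polys_def by auto
lemma hom_zero: "(\<lambda>t. 0) \<in> hom_polys d"
  unfolding hom_polys_def by auto

definition ImR :: "nat \<Rightarrow> 'a \<times> 'a \<times> 'a \<Rightarrow> 'a \<times> 'a \<times> 'a \<Rightarrow> 'a::field poly set" where
  "ImR n u v = (\<lambda>f. restrict_line f n u v) ` hom_polys n"

lemma Im_add: "p \<in> ImR n u v \<Longrightarrow> q \<in> ImR n u v \<Longrightarrow> p + q \<in> ImR n u v"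
proof -
  assume "p \<in> ImR n u v" "q \<in> ImR n u v"
  then obtain f g where f: "f \<in> hom_polys n" "p = restrict_line f n u v"
    and g: "g \<in> hom_polys n" "q = restrict_line g n u v" unfolding ImR_def by blast
  have "p + q = restrict_line (\<lambda>t. f t + g t) n u v" using f g R_add[of f g n u v] by simp
  then show ?thesis unfolding ImR_def using hom_add[OF f(1) g(1)] by blast
qed

lemma Im_smult: "p \<in> ImR n u v \<Longrightarrow> smult c p \<in> ImR n u v"
proof -
  assume "p \<in> ImR n u v"
  then obtain f where f: "f \<in> hom_polys n" "p = restrict_line f n u v" unfolding ImR_def by blast
  have "smult c p = restrict_line (\<lambda>t. c * f t) n u v" using f R_smult[of c f n u v] by simp
  then show ?thesis unfolding ImR_def using hom_smult[OF f(1)] by blast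
qed

lemma Im_zero: "0 \<in> ImR n u v"
  unfolding ImR_def by (rule image_eqI[of _ _ "\<lambda>t. 0"]) (simp_all add: R_zero hom_zero)

lemma Im_sum: "finite A \<Longrightarrow> (\<And>i. i \<in> A \<Longrightarrow> h i \<in> ImR n u v) \<Longrightarrow> sum h A \<in> ImR n u v"
  by (induct A rule: finite_induct) (auto intro: Im_add Im_zero)

lemma Im_one: "1 \<in> ImR 0 u v"
proof -
  let ?f = "\<lambda>t. if t = (0, 0, 0) then 1 else 0 :: 'a"
  have "?f \<in> hom_polys 0" unfolding hom_polys_def by auto
  moreover have "restrict_line ?f 0 u v = 1" unfolding restrict_line_def by simp
  ultimately show ?thesis unfolding ImR_def by (intro image_eqI[of _ _ ?f]) simp_all
qed

lemma Im_X: "p \<in> ImR n u v \<Longrightarrow> LX u v * p \<in> ImR (Suc n) u v"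
proof -
  assume "p \<in> ImR n u v"
  then obtain f where f: "f \<in> hom_polys n" "p = restrict_line f n u v" unfolding ImR_def by blast
  have "LX u v * p = restrict_line (shx f) (Suc n) u v" using f R_shx RL_eq by metis
  then show ?thesis unfolding ImR_def using shx_hom[OF f(1)] by blast
qed
lemma Im_Y: "p \<in> ImR n u v \<Longrightarrow> LY u v * p \<in> ImR (Suc n) u v"
proof -
  assume "p \<in> ImR n u v"
  then obtain f where f: "f \<in> hom_polys n" "p = restrict_line f n u v" unfolding ImR_def by blast
  have "LY u v * p = restrict_line (shy f) (Suc n) u v" using f R_shy RL_eq by metis
  then show ?thesis unfolding ImR_def using shy_hom[OF f(1)] by blast
qed
lemma Im_Z: "p \<in> ImR n u v \<Longrightarrow> LZ u v * p \<in> ImR (Suc n) u v"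
proof -
  assume "p \<in> ImR n u v"
  then obtain f where f: "f \<in> hom_polys n" "p = restrict_line f n u v" unfolding ImR_def by blast
  have "LZ u v * p = restrict_line (shz f) (Suc n) u v" using f R_shz RL_eq by metis
  then show ?thesis unfolding ImR_def using shz_hom[OF f(1)] by blast
qed

lemma Im_lin: "p \<in> ImR n u v \<Longrightarrow>
   (smult a (LX u v) + smult b (LY u v) + smult c (LZ u v)) * p \<in> ImR (Suc n) u v"
proof -
  assume p: "p \<in> ImR n u v"
  have e: "(smult a (LX u v) + smult b (LY u v) + smult c (LZ u v)) * p
     = smult a (LX u v * p) + smult b (LY u v * p) + smult c (LZ u v * p)"
    by (simp only: distrib_right mult_smult_left)
  show ?thesis unfolding e by (intro Im_add Im_smult Im_X Im_Y Im_Z p)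
qed

lemma lin_combo:
  "smult a (LX u v) + smult b (LY u v) + smult c (LZ u v)
   = [:a * fst v + b * fst (snd v) + c * snd (snd v), a * fst u + b * fst (snd u) + c * snd (snd u):]"
  by simp

lemma solve2:
  fixes x1 x2 y1 y2 :: "'a::field"
  assumes m: "x1 * y2 - x2 * y1 \<noteq> 0"
  shows "y2 * inverse (x1 * y2 - x2 * y1) * x1 + (- y1 * inverse (x1 * y2 - x2 * y1)) * x2 = 1"
    and "y2 * inverse (x1 * y2 - x2 * y1) * y1 + (- y1 * inverse (x1 * y2 - x2 * y1)) * y2 = 0"
proof -
  have "y2 * inverse (x1 * y2 - x2 * y1) * x1 + (- y1 * inverse (x1 * y2 - x2 * y1)) * x2
     = (x1 * y2 - x2 * y1) * inverse (x1 * y2 - x2 * y1)" by (simp add: algebra_simps)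
  then show "y2 * inverse (x1 * y2 - x2 * y1) * x1 + (- y1 * inverse (x1 * y2 - x2 * y1)) * x2 = 1"
    using m by simp
  show "y2 * inverse (x1 * y2 - x2 * y1) * y1 + (- y1 * inverse (x1 * y2 - x2 * y1)) * y2 = 0"
    by (simp add: algebra_simps)
qed

lemma lin_solve:
  fixes u v :: "'a::field \<times> 'a \<times> 'a"
  assumes li: "lin_indep2 u v"
  shows "\<exists>a b c. a * fst u + b * fst (snd u) + c * snd (snd u) = 1 \<and>
                 a * fst v + b * fst (snd v) + c * snd (snd v) = 0"
proof -
  obtain u1 u2 u3 where u: "u = (u1, u2, u3)" by (cases u) auto
  obtain v1 v2 v3 where v: "v = (v1, v2, v3)" by (cases v) auto
  have li': "\<And>a b. a * u1 + b * v1 = 0 \<Longrightarrow> a * u2 + b * v2 = 0 \<Longrightarrow> a * u3 + b * v3 = 0 \<Longrightarrow> a = 0 \<and> b = 0"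
    using li unfolding lin_indep2_def u v fst_conv snd_conv by blast
  show ?thesis
  proof (cases "u1 * v2 - u2 * v1 \<noteq> 0")
    case True
    note s = solve2[OF True]
    show ?thesis unfolding u v fst_conv snd_conv
      by (rule exI[of _ "v2 * inverse (u1 * v2 - u2 * v1)"], rule exI[of _ "- v1 * inverse (u1 * v2 - u2 * v1)"],
          rule exI[of _ 0]) (simp only: s mult_zero_left add_0_right simp_thms)
  next
    case F1: False
    show ?thesis
    proof (cases "u1 * v3 - u3 * v1 \<noteq> 0")
      case True
      note s = solve2[OF True]
      show ?thesis unfolding u v fst_conv snd_conv
        by (rule exI[of _ "v3 * inverse (u1 * v3 - u3 * v1)"], rule exI[of _ 0],
            rule exI[of _ "- v1 * inverse (u1 * v3 - u3 * v1)"]) (simp only: s mult_zero_left add_0_right simp_thms)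
    next
      case F2: False
      show ?thesis
      proof (cases "u2 * v3 - u3 * v2 \<noteq> 0")
        case True
        note s = solve2[OF True]
        show ?thesis unfolding u v fst_conv snd_conv
          by (rule exI[of _ 0], rule exI[of _ "v3 * inverse (u2 * v3 - u3 * v2)"],
              rule exI[of _ "- v2 * inverse (u2 * v3 - u3 * v2)"]) (simp only: s mult_zero_left add_0_left simp_thms)
      next
        case F3: False
        have m12: "u1 * v2 - u2 * v1 = 0" and m13: "u1 * v3 - u3 * v1 = 0" and m23: "u2 * v3 - u3 * v2 = 0"
          using F1 F2 F3 by auto
        show ?thesis
        proof (cases "u1 = 0 \<and> u2 = 0 \<and> u3 = 0")
          case True
          then have "(1::'a) = 0 \<and> (0::'a) = 0" using li'[of 1 0] by simp
          then show ?thesis by simp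
        next
          case False
          then consider "u1 \<noteq> 0" | "u2 \<noteq> 0" | "u3 \<noteq> 0" by blast
          then show ?thesis
          proof cases
            case 1
            have e1: "v1 * u1 + - u1 * v1 = 0" by simp
            have e2: "v1 * u2 + - u1 * v2 = 0" using m12 by (simp add: algebra_simps)
            have e3: "v1 * u3 + - u1 * v3 = 0" using m13 by (simp add: algebra_simps)
            have "v1 = 0 \<and> - u1 = 0" using li'[OF e1 e2 e3] .
            then show ?thesis using 1 by simp
          next
            case 2
            have e1: "v2 * u1 + - u2 * v1 = 0" using m12 by (simp add: algebra_simps)
            have e2: "v2 * u2 + - u2 * v2 = 0" by simp
            have e3: "v2 * u3 + - u2 * v3 = 0" using m23 by (simp add: algebra_simps)
            have "v2 = 0 \<and> - u2 = 0" using li'[OF e1 e2 e3] .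
            then show ?thesis using 2 by simp
          next
            case 3
            have e1: "v3 * u1 + - u3 * v1 = 0" using m13 by (simp add: algebra_simps)
            have e2: "v3 * u2 + - u3 * v2 = 0" using m23 by (simp add: algebra_simps)
            have e3: "v3 * u3 + - u3 * v3 = 0" by simp
            have "v3 = 0 \<and> - u3 = 0" using li'[OF e1 e2 e3] .
            then show ?thesis using 3 by simp
          qed
        qed
      qed
    qed
  qed
qed

lemma lin_indep2_sym: "lin_indep2 u v \<Longrightarrow> lin_indep2 v u"
  unfolding lin_indep2_def by (metis add.commute)

lemma Im_monom:
  fixes u v :: "'a::field \<times> 'a \<times> 'a"
  assumes li: "lin_indep2 u v"
  shows "m \<le> n \<Longrightarrow> monom 1 m \<in> ImR n u v"
proof -
  obtain a b c where s: "smult a (LX u v) + smult b (LY u v) + smult c (LZ u v) = [:0, 1:]"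
    using lin_solve[OF li] unfolding lin_combo by auto
  obtain a' b' c' where o: "smult a' (LX u v) + smult b' (LY u v) + smult c' (LZ u v) = 1"
    using lin_solve[OF lin_indep2_sym[OF li]] unfolding lin_combo by (auto simp: one_pCons)
  show "m \<le> n \<Longrightarrow> monom 1 m \<in> ImR n u v"
  proof (induction n arbitrary: m)
    case 0
    then show ?case using Im_one by (simp add: one_pCons monom_0)
  next
    case (Suc n)
    show ?case
    proof (cases m)
      case 0
      have "1 \<in> ImR n u v" using Suc.IH[of 0] by (simp add: monom_0 one_pCons)
      then have "(smult a' (LX u v) + smult b' (LY u v) + smult c' (LZ u v)) * 1 \<in> ImR (Suc n) u v"
        by (rule Im_lin)
      then show ?thesis using 0 o by (simp add: monom_0 one_pCons)
    next
      case (Suc m')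
      then have "monom 1 m' \<in> ImR n u v" using Suc.IH Suc.prems by simp
      then have "(smult a (LX u v) + smult b (LY u v) + smult c (LZ u v)) * monom 1 m' \<in> ImR (Suc n) u v"
        by (rule Im_lin)
      then show ?thesis using Suc s by (simp add: monom_Suc)
    qed
  qed
qed

lemma Im_eq:
  fixes u v :: "'a::field \<times> 'a \<times> 'a"
  assumes li: "lin_indep2 u v"
  shows "ImR n u v = {g. degree g \<le> n}"
proof
  show "ImR n u v \<subseteq> {g. degree g \<le> n}"
  proof
    fix g assume "g \<in> ImR n u v"
    then obtain f where "g = restrict_line f n u v" unfolding ImR_def by blast
    then show "g \<in> {g. degree g \<le> n}" using R_deg[of f n u v] by simp
  qed
  show "{g. degree g \<le> n} \<subseteq> ImR n u v"
  proof
    fix g :: "'a poly" assume "g \<in> {g. degree g \<le> n}"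
    then have "(\<Sum>i\<le>n. monom (coeff g i) i) = g" by (simp add: poly_as_sum_of_monoms')
    moreover have "(\<Sum>i\<le>n. monom (coeff g i) i) \<in> ImR n u v"
    proof (rule Im_sum)
      fix i assume "i \<in> {..n}"
      then have "smult (coeff g i) (monom 1 i) \<in> ImR n u v" using Im_smult[OF Im_monom[OF li]] by simp
      then show "monom (coeff g i) i \<in> ImR n u v" by (simp add: smult_monom)
    qed simp
    ultimately show "g \<in> ImR n u v" by simp
  qed
qed




lemma fin_hom: "finite (hom_polys d :: ('a::{finite,zero}) hpoly set)"
proof -
  let ?D = "{..d} \<times> {..d} \<times> {..d}"
  have "hom_polys d \<subseteq> {f :: 'a hpoly. \<forall>x. (x \<in> ?D \<longrightarrow> f x \<in> UNIV) \<and> (x \<notin> ?D \<longrightarrow> f x = 0)}"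
    unfolding hom_polys_def by force
  moreover have "finite {f :: 'a hpoly. \<forall>x. (x \<in> ?D \<longrightarrow> f x \<in> UNIV) \<and> (x \<notin> ?D \<longrightarrow> f x = 0)}"
    by (rule finite_set_of_finite_funs) auto
  ultimately show ?thesis by (rule finite_subset)
qed

lemma fiber:
  fixes u v :: "'a::{finite,field} \<times> 'a \<times> 'a"
  assumes li: "lin_indep2 u v"
  shows "card {f \<in> hom_polys d. P (restrict_line f d u v)} =
         card {g. degree g \<le> d \<and> P g} * card {f \<in> hom_polys d. restrict_line f d u v = 0}"
proof -
  let ?H = "hom_polys d :: 'a hpoly set"
  let ?R = "\<lambda>f. restrict_line f d u v"
  let ?K = "{f \<in> ?H. ?R f = 0}"
  let ?A = "{g :: 'a poly. degree g \<le> d \<and> P g}"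
  define sec where "sec g = (SOME f. f \<in> ?H \<and> ?R f = g)" for g
  have sec: "sec g \<in> ?H \<and> ?R (sec g) = g" if "degree g \<le> d" for g
  proof -
    have "g \<in> ImR d u v" using that Im_eq[OF li] by simp
    then have "\<exists>f. f \<in> ?H \<and> ?R f = g" unfolding ImR_def by blast
    then show ?thesis unfolding sec_def by (rule someI_ex)
  qed
  let ?psi = "\<lambda>(g, k). (\<lambda>t. sec g t + k t)"
  have inj: "inj_on ?psi (?A \<times> ?K)"
  proof (rule inj_onI)
    fix x y assume hx: "x \<in> ?A \<times> ?K" and hy: "y \<in> ?A \<times> ?K" and e: "?psi x = ?psi y"
    obtain g k where xe: "x = (g, k)" by (cases x)
    obtain g' k' where ye: "y = (g', k')" by (cases y)
    have g: "degree g \<le> d" "k \<in> ?K" and g': "degree g' \<le> d" "k' \<in> ?K" using hx hy xe ye by auto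
    have e': "(\<lambda>t. sec g t + k t) = (\<lambda>t. sec g' t + k' t)" using e xe ye by simp
    have "?R (\<lambda>t. sec g t + k t) = g" using R_add[of "sec g" k d u v] sec[OF g(1)] g(2) by simp
    moreover have "?R (\<lambda>t. sec g' t + k' t) = g'" using R_add[of "sec g'" k' d u v] sec[OF g'(1)] g'(2) by simp
    ultimately have gg: "g = g'" using e' by simp
    have "k = k'"
    proof
      fix t show "k t = k' t" using fun_cong[OF e', of t] gg by simp
    qed
    then show "x = y" using xe ye gg by simp
  qed
  have img: "?psi ` (?A \<times> ?K) = {f \<in> ?H. P (?R f)}"
  proof (rule set_eqI, rule iffI)
    fix f assume "f \<in> ?psi ` (?A \<times> ?K)"
    then obtain g k where h: "degree g \<le> d" "P g" "k \<in> ?K" "f = (\<lambda>t. sec g t + k t)" by auto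
    have "f \<in> ?H" using h sec[OF h(1)] hom_add by auto
    moreover have "?R f = g" using h R_add[of "sec g" k d u v] sec[OF h(1)] by simp
    ultimately show "f \<in> {f \<in> ?H. P (?R f)}" using h(2) by simp
  next
    fix f assume f: "f \<in> {f \<in> ?H. P (?R f)}"
    let ?g = "?R f"
    have dg: "degree ?g \<le> d" by (rule R_deg)
    let ?k = "\<lambda>t. f t - sec ?g t"
    have "?k \<in> ?H" using f sec[OF dg] hom_diff by auto
    moreover have "?R ?k = 0" using R_diff[of f "sec ?g" d u v] sec[OF dg] by simp
    moreover have "f = ?psi (?g, ?k)" by simp
    ultimately show "f \<in> ?psi ` (?A \<times> ?K)" using f dg by (intro image_eqI[of _ _ "(?g, ?k)"]) auto
  qed
  have "card {f \<in> ?H. P (?R f)} = card (?A \<times> ?K)" using card_image[OF inj] img by simp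
  also have "\<dots> = card ?A * card ?K" by (rule card_cartesian_product)
  finally show ?thesis .
qed

lemma ratio:
  fixes u v :: "'a::{finite,field} \<times> 'a \<times> 'a"
  assumes li: "lin_indep2 u v"
  shows "real (card {f \<in> hom_polys d. mult2_off_P d u v f}) / real (card (hom_polys d :: 'a hpoly set))
       = real (card (nsq d :: 'a poly set)) / real (card (UNIV :: 'a set)) ^ Suc d"
proof -
  let ?K = "{f \<in> hom_polys d. restrict_line f d u v = 0} :: 'a hpoly set"
  have K0: "card ?K > 0"
  proof -
    have "(\<lambda>t. 0) \<in> ?K" using hom_zero[of d] R_zero[of d u v] by auto
    moreover have "finite ?K" using fin_hom[of d, where 'a='a] by auto
    ultimately show ?thesis using card_gt_0_iff by blast
  qed
  have A: "card {f \<in> hom_polys d. mult2_off_P d u v f} = card (nsq d :: 'a poly set) * card ?K"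
    using fiber[OF li, of d "\<lambda>g. \<exists>p. irreducible p \<and> p ^ 2 dvd g"]
    unfolding mult2_off_P_def nsq_def by simp
  have B: "card (hom_polys d :: 'a hpoly set) = card (UNIV :: 'a set) ^ Suc d * card ?K"
    using fiber[OF li, of d "\<lambda>g. True"] card_deg_le[of d, where 'a='a] by simp
  show ?thesis unfolding A B using K0 by (simp add: field_simps)
qed

lemma card_ge2: "card (UNIV :: 'a::{finite,field} set) \<ge> 2"
proof -
  have "{0, 1} \<subseteq> (UNIV :: 'a set)" by simp
  then have "card {0, 1 :: 'a} \<le> card (UNIV :: 'a set)" by (rule card_mono[OF finite_UNIV])
  then show ?thesis by simp
qed

theorem mainTheorem9:
  fixes u v :: "'a::{finite,field} \<times> 'a \<times> 'a"
  assumes "lin_indep2 u v"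
  shows "(\<lambda>d. real (card {f \<in> hom_polys d. mult2_off_P d u v f}) / real (card (hom_polys d :: 'a hpoly set)))
           \<longlonglongrightarrow> (1 / real (card (UNIV :: 'a set)))"
proof -
  let ?q = "real (card (UNIV :: 'a set))"
  have q2: "?q \<ge> 2" using card_ge2[where 'a='a] by linarith
  have eq: "real (card {f \<in> hom_polys (n + 2). mult2_off_P (n + 2) u v f}) / real (card (hom_polys (n + 2) :: 'a hpoly set))
     = 1 / ?q - ((?q - 1) / ?q ^ 3) * (1 / ?q) ^ n" for n
  proof -
    have "real (card {f \<in> hom_polys (n + 2). mult2_off_P (n + 2) u v f}) / real (card (hom_polys (n + 2) :: 'a hpoly set))
        = (?q ^ (n + 2) - ?q + 1) / ?q ^ Suc (n + 2)"
      unfolding ratio[OF assms] card_nsq ..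
    also have "\<dots> = 1 / ?q - ((?q - 1) / ?q ^ 3) * (1 / ?q) ^ n"
      using q2 by (simp add: field_simps power_add eval_nat_numeral)
    finally show ?thesis .
  qed
  have "(\<lambda>n. 1 / ?q - ((?q - 1) / ?q ^ 3) * (1 / ?q) ^ n) \<longlonglongrightarrow> 1 / ?q - 0"
    by (intro tendsto_diff tendsto_const tendsto_mult_right_zero LIMSEQ_realpow_zero) (use q2 in auto)
  then have "(\<lambda>n. real (card {f \<in> hom_polys (n + 2). mult2_off_P (n + 2) u v f}) / real (card (hom_polys (n + 2) :: 'a hpoly set)))
     \<longlonglongrightarrow> 1 / ?q" unfolding eq by simp
  then show ?thesis by (rule LIMSEQ_offset)
qed


end
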